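(* Let $k\geq1$ and let $w,\bar w\in\widetilde W_n$ both be increasing up to $k$ and have the same $k$-truncated A-code, with $\ell(w)=\ell(\bar w)+1$. Suppose that $v(\bar w)=s_iv(w)$ for some simple reflection $s_i$, $i\in\{\Box,1,2,\ldots\}$. Then $\bar w=s_iw$.
   Context: For $n\geq2$, $\widetilde W_n$ is the group of signed permutations $w=(w_1,\ldots,w_n)$ of $\{1,\ldots,n\}$ with an even number of negative entries; $\ell(w)=\#\{i<j\mid w_i>w_j\}+\sum_{w_i<0}(|w_i|-1)$. Left multiplication: for $i\geq1$, $s_iw$ interchanges the values $i,i+1$ (and $-i,-(i+1)$) in $w$; $s_\Box w$ replaces the values $1,2,-1,-2$ by $-2,-1,2,1$ respectively. $w$ is increasing up to $k$ if $|w_1|<w_2<\cdots<w_k$ (vacuous for $k=1$). The A-code is $\gamma_i:=\#\{j>i\mid w_j<w_i\}$ (for $w_1<-1$ the paper uses the A-code of the element obtained by changing the signs of $w_1$ and of the entry $\pm1$; this does not affect entries $\gamma_i$ with $i>k$), and the $k$-truncated A-code is $(\gamma_{k+1},\ldots,\gamma_n)$. $v(w)$ is obtained from $w$ by rearranging $w_{k+1},\ldots,w_n$ in increasing order. *)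

theory Defs
  imports Main
begin

text \<open>Signed permutations are lists of integers of length n; position i (1-based in
the paper) is list index i-1.\<close>

definition signed_perm :: "nat \<Rightarrow> int list \<Rightarrow> bool" where
  "signed_perm n w \<longleftrightarrow> length w = n \<and> distinct (map abs w) \<and> set (map abs w) = {1..int n}"

definition typeD :: "nat \<Rightarrow> int list \<Rightarrow> bool" where
  "typeD n w \<longleftrightarrow> signed_perm n w \<and> even (length (filter (\<lambda>x. x < 0) w))"

definition ell :: "int list \<Rightarrow> nat" where
  "ell w = card {(i, j). i < j \<and> j < length w \<and> w ! i > w ! j}
           + sum_list (map (\<lambda>x. if x < 0 then nat (\<bar>x\<bar> - 1) else 0) w)"

datatype sref = Box | S nat

definition valid_sref :: "nat \<Rightarrow> sref \<Rightarrow> bool" where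
  "valid_sref n s = (case s of Box \<Rightarrow> True | S i \<Rightarrow> 1 \<le> i \<and> i < n)"

fun sval :: "sref \<Rightarrow> int \<Rightarrow> int" where
  "sval Box x = (if x = 1 then -2 else if x = 2 then -1 else if x = -1 then 2
                 else if x = -2 then 1 else x)"
| "sval (S i) x = (if x = int i then int i + 1 else if x = int i + 1 then int i
                 else if x = - int i then - (int i + 1) else if x = - (int i + 1) then - int i
                 else x)"

text \<open>Left multiplication by a simple reflection acts on the values.\<close>
definition lmult :: "sref \<Rightarrow> int list \<Rightarrow> int list" where
  "lmult s w = map (sval s) w"

definition incr_upto :: "nat \<Rightarrow> int list \<Rightarrow> bool" where
  "incr_upto k w \<longleftrightarrow> (2 \<le> k \<longrightarrow> \<bar>w ! 0\<bar> < w ! 1) \<and>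
     (\<forall>j. 1 \<le> j \<and> j + 1 < k \<longrightarrow> w ! j < w ! (j + 1))"

text \<open>A-code entry at (0-based) position i.\<close>
definition acode :: "int list \<Rightarrow> nat \<Rightarrow> nat" where
  "acode w i = card {j. i < j \<and> j < length w \<and> w ! j < w ! i}"

definition trunc_acode :: "nat \<Rightarrow> int list \<Rightarrow> nat list" where
  "trunc_acode k w = map (acode w) [k..<length w]"

definition vperm :: "nat \<Rightarrow> int list \<Rightarrow> int list" where
  "vperm k w = take k w @ sort (drop k w)"

end

theory Submission
  imports Defs
begin

lemma nth_filter_less_sorted:
  fixes ys :: "int list"
  assumes "sorted_wrt (<) ys" "x \<in> set ys"
  shows "ys ! length (filter (\<lambda>y. y < x) ys) = x"
  using assms
proof (induction ys)
  case Nil then show ?case by simp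
next
  case (Cons y ys)
  show ?case
  proof (cases "y = x")
    case True
    then have "filter (\<lambda>z. z < x) ys = []" using Cons.prems by (auto simp: filter_empty_conv)
    then show ?thesis using True by simp
  next
    case False
    then have "x \<in> set ys" "y < x" using Cons.prems by auto
    then show ?thesis using Cons by simp
  qed
qed

lemma remove1_map_inj:
  assumes "inj f"
  shows "remove1 (f a) (map f xs) = map f (remove1 a xs)"
  by (induction xs) (auto dest: injD[OF assms])

lemma acode_Cons_0:
  "acode (a # t) 0 = length (filter (\<lambda>y. y < a) t)"
proof -
  have "{j. 0 < j \<and> j < length (a # t) \<and> (a # t) ! j < (a # t) ! 0}
        = Suc ` {i. i < length t \<and> t ! i < a}"
    by (auto simp: image_iff gr0_conv_Suc)
  then show ?thesis unfolding acode_def length_filter_conv_card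
    by (simp add: card_image)
qed

lemma acode_Cons_Suc:
  "acode (a # t) (Suc i) = acode t i"
proof -
  have "{j. Suc i < j \<and> j < length (a # t) \<and> (a # t) ! j < (a # t) ! Suc i}
        = Suc ` {j. i < j \<and> j < length t \<and> t ! j < t ! i}"
    by (auto simp: image_iff Suc_less_eq2)
  then show ?thesis unfolding acode_def
    by (simp add: card_image)
qed

lemma acode_drop:
  assumes "k \<le> length w"
  shows "acode w (k + i) = acode (drop k w) i"
proof -
  have "{j. k + i < j \<and> j < length w \<and> w ! j < w ! (k + i)}
        = (\<lambda>j. k + j) ` {j. i < j \<and> j < length (drop k w) \<and> drop k w ! j < drop k w ! i}"
  proof (rule set_eqI, rule iffI)
    fix x assume x: "x \<in> {j. k + i < j \<and> j < length w \<and> w ! j < w ! (k + i)}"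
    then have "x = k + (x - k)" by auto
    then show "x \<in> (\<lambda>j. k + j) ` {j. i < j \<and> j < length (drop k w) \<and> drop k w ! j < drop k w ! i}"
      using x assms by (auto simp: image_iff intro!: exI[where x="x - k"])
  qed (use assms in auto)
  then show ?thesis unfolding acode_def
    by (simp add: card_image)
qed

lemma main:
  fixes t u :: "int list"
  assumes "distinct t" "distinct u" "length t = length u"
    "\<forall>i<length t. acode t i = acode u i"
    "sort u = map f (sort t)" "inj f"
  shows "u = map f t"
  using assms
proof (induction t arbitrary: u)
  case Nil then show ?case by simp
next
  case (Cons a t')
  obtain b u' where u: "u = b # u'" using Cons.prems(3) by (cases u) auto
  define c where "c = length (filter (\<lambda>y. y < a) t')"
  have c0: "acode (a # t') 0 = c" by (simp add: acode_Cons_0 c_def)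
  have cb: "acode u 0 = c" using Cons.prems(4) c0 by auto
  hence cb': "c = length (filter (\<lambda>y. y < b) u')" using u by (simp add: acode_Cons_0)
  have fa: "length (filter (\<lambda>y. y < a) (sort (a # t'))) = c"
    unfolding c_def filter_sort length_sort by simp
  have fb: "length (filter (\<lambda>y. y < b) (sort u)) = c"
    unfolding cb' filter_sort length_sort u by simp
  have sa: "sort (a # t') ! c = a"
  proof -
    have "sorted_wrt (<) (sort (a # t'))"
      unfolding strict_sorted_iff using Cons.prems(1) by (simp only: sorted_sort distinct_sort)
    moreover have "a \<in> set (sort (a # t'))" by (simp only: set_sort) simp
    ultimately show ?thesis using nth_filter_less_sorted[of "sort (a # t')" a] fa by simp
  qed
  have sb: "sort u ! c = b"
  proof -
    have "sorted_wrt (<) (sort u)"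
      unfolding strict_sorted_iff using Cons.prems(2) by (simp only: sorted_sort distinct_sort)
    moreover have "b \<in> set (sort u)" using u by (simp only: set_sort) simp
    ultimately show ?thesis using nth_filter_less_sorted[of "sort u" b] fb by simp
  qed
  have clt: "c < length (a # t')" unfolding c_def
    using length_filter_le[of _ t'] by (simp add: le_imp_less_Suc)
  have ba: "b = f a" using sb sa Cons.prems(5) clt by (metis length_sort nth_map)
  have "sort u' = remove1 b (sort u)" using u by simp
  also have "\<dots> = map f (remove1 a (sort (a # t')))"
    using Cons.prems(5) ba remove1_map_inj[OF Cons.prems(6)] by simp
  also have "\<dots> = map f (sort t')" by simp
  finally have su: "sort u' = map f (sort t')" .
  have "\<forall>i<length t'. acode t' i = acode u' i"
    using Cons.prems(4) u by (metis Suc_less_eq acode_Cons_Suc length_Cons)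
  then have "u' = map f t'"
    using Cons.IH[of u'] Cons.prems u su by simp
  then show ?case using u ba by simp
qed

lemma sval_invol: "valid_sref n s \<Longrightarrow> sval s (sval s x) = x"
  by (cases s) (auto simp: valid_sref_def)

lemma inj_sval: "valid_sref n s \<Longrightarrow> inj (sval s)"
  by (metis injI sval_invol)

theorem lemma12:
  fixes n k :: nat and w wb :: "int list" and s :: sref
  assumes "2 \<le> n" and "1 \<le> k" and "k \<le> n"
    and "typeD n w" and "typeD n wb"
    and "incr_upto k w" and "incr_upto k wb"
    and "trunc_acode k w = trunc_acode k wb"
    and "ell w = ell wb + 1"
    and "valid_sref n s"
    and "vperm k wb = lmult s (vperm k w)"
  shows "wb = lmult s w"
proof -
  have lw: "length w = n" and lwb: "length wb = n"
    and dw: "distinct (map abs w)" and dwb: "distinct (map abs wb)"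
    using assms(4,5) unfolding typeD_def signed_perm_def by auto
  have dt: "distinct (drop k w)" using dw distinct_drop distinct_map by (metis drop_map)
  have du: "distinct (drop k wb)" using dwb distinct_drop distinct_map by (metis drop_map)
  have eq: "take k wb @ sort (drop k wb) = map (sval s) (take k w) @ map (sval s) (sort (drop k w))"
    using assms(11) unfolding vperm_def lmult_def by simp
  have "length (take k wb) = length (map (sval s) (take k w))" using lw lwb assms(3) by simp
  then have h: "take k wb = map (sval s) (take k w)"
    and tl: "sort (drop k wb) = map (sval s) (sort (drop k w))"
    using eq by auto
  have codes: "\<forall>i<length (drop k w). acode (drop k w) i = acode (drop k wb) i"
  proof (intro allI impI)
    fix i assume i: "i < length (drop k w)"
    have "map (acode w) [k..<n] ! i = map (acode wb) [k..<n] ! i"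
      using assms(8) lw lwb unfolding trunc_acode_def by (simp only:)
    then have "acode w (k + i) = acode wb (k + i)" using i lw by (simp del: map_eq_conv)
    then show "acode (drop k w) i = acode (drop k wb) i"
      using acode_drop assms(3) lw lwb by metis
  qed
  have "drop k wb = map (sval s) (drop k w)"
    using main[OF dt du _ codes tl inj_sval[OF assms(10)]] lw lwb by simp
  then have "take k wb @ drop k wb = map (sval s) (take k w @ drop k w)"
    using h by (simp only: map_append)
  then show ?thesis unfolding lmult_def by simp
qed

end
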